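(* Let $t \geq 1$ and $p \geq 1$ be integers, let $\mathcal{F}$ be a finite family of finite sets, and let $\mathcal{L}$ be a largest $t$-intersecting sub-family of $\mathcal{F}$. Suppose that the maximum of $\prod_{i=1}^p |\mathcal{B}_i|$ over all $p$-tuples $(\mathcal{B}_1, \dots, \mathcal{B}_p)$ of cross-$t$-intersecting sub-families of $\mathcal{F}$ is attained when $\mathcal{B}_1 = \dots = \mathcal{B}_p = \mathcal{L}$. Then for any integer $k \geq p$, the maximum of $\prod_{i=1}^k |\mathcal{A}_i|$ over all $k$-tuples $(\mathcal{A}_1, \dots, \mathcal{A}_k)$ of cross-$t$-intersecting sub-families of $\mathcal{F}$ is attained when $\mathcal{A}_1 = \dots = \mathcal{A}_k = \mathcal{L}$.
   Context: A family $\mathcal{A}$ is $t$-intersecting if $|A \cap B| \geq t$ for all $A, B \in \mathcal{A}$ with $A \neq B$. Families $\mathcal{A}_1, \dots, \mathcal{A}_k$ (not necessarily distinct or non-empty) are cross-$t$-intersecting if for all $i \neq j$, $|A \cap B| \geq t$ for every $A \in \mathcal{A}_i$, $B \in \mathcal{A}_j$. *)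

theory Defs
  imports Main
begin

definition t_intersecting :: "nat \<Rightarrow> 'a set set \<Rightarrow> bool" where
  "t_intersecting t \<A> \<longleftrightarrow> (\<forall>A\<in>\<A>. \<forall>B\<in>\<A>. A \<noteq> B \<longrightarrow> t \<le> card (A \<inter> B))"

text \<open>A k-tuple of families is represented by a function on indices 0..k-1.\<close>
definition cross_t_intersecting :: "nat \<Rightarrow> nat \<Rightarrow> (nat \<Rightarrow> 'a set set) \<Rightarrow> bool" where
  "cross_t_intersecting t k \<A> \<longleftrightarrow>
     (\<forall>i<k. \<forall>j<k. i \<noteq> j \<longrightarrow> (\<forall>A\<in>\<A> i. \<forall>B\<in>\<A> j. t \<le> card (A \<inter> B)))"

definition largest_t_intersecting :: "nat \<Rightarrow> 'a set set \<Rightarrow> 'a set set \<Rightarrow> bool" where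
  "largest_t_intersecting t \<F> \<L> \<longleftrightarrow>
     \<L> \<subseteq> \<F> \<and> t_intersecting t \<L> \<and>
     (\<forall>\<L>'. \<L>' \<subseteq> \<F> \<and> t_intersecting t \<L>' \<longrightarrow> card \<L>' \<le> card \<L>)"

text \<open>Upper bound: the product of sizes over k-tuples of cross-t-intersecting
  sub-families of F never exceeds |L|^k (the value at the constant tuple).\<close>
definition max_attained_at_const :: "nat \<Rightarrow> nat \<Rightarrow> 'a set set \<Rightarrow> 'a set set \<Rightarrow> bool" where
  "max_attained_at_const t k \<F> \<L> \<longleftrightarrow>
     (\<forall>\<A>. (\<forall>i<k. \<A> i \<subseteq> \<F>) \<and> cross_t_intersecting t k \<A> \<longrightarrow>
        (\<Prod>i<k. card (\<A> i)) \<le> card \<L> ^ k)"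

end

theory Submission
  imports Defs
begin

lemma skip_img:
  fixes j k :: nat
  assumes "j < Suc k"
  shows "(\<lambda>i. if i < j then i else Suc i) ` {..<k} = {..<Suc k} - {j}"
proof
  show "(\<lambda>i. if i < j then i else Suc i) ` {..<k} \<subseteq> {..<Suc k} - {j}" by auto
next
  show "{..<Suc k} - {j} \<subseteq> (\<lambda>i. if i < j then i else Suc i) ` {..<k}"
  proof
    fix x assume x: "x \<in> {..<Suc k} - {j}"
    show "x \<in> (\<lambda>i. if i < j then i else Suc i) ` {..<k}"
    proof (cases "x < j")
      case True then show ?thesis using x assms by (auto intro!: image_eqI[where x=x])
    next
      case False
      then obtain y where "x = Suc y" "j \<le> y" using x by (cases x) auto
      then show ?thesis using x by (auto intro!: image_eqI[where x=y])
    qed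
  qed
qed

lemma skip_inj: "inj_on (\<lambda>i::nat. if i < j then i else Suc i) X"
  by (auto simp: inj_on_def split: if_splits)

lemma step:
  fixes t k :: nat and \<F> \<L> :: "'a set set"
  assumes k: "k \<ge> 1" and IH: "max_attained_at_const t k \<F> \<L>"
  shows "max_attained_at_const t (Suc k) \<F> \<L>"
  unfolding max_attained_at_const_def
proof (intro allI impI)
  fix A assume H: "(\<forall>i<Suc k. A i \<subseteq> \<F>) \<and> cross_t_intersecting t (Suc k) A"
  define c where "c i = card (A i)" for i
  define P where "P = (\<Prod>i<Suc k. c i)"
  define f where "f j = (\<lambda>i::nat. if i < j then i else Suc i)" for j
  have Q: "(\<Prod>i\<in>{..<Suc k} - {j}. c i) \<le> card \<L> ^ k" if j: "j < Suc k" for j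
  proof -
    define B where "B i = A (f j i)" for i
    have "(\<forall>i<k. B i \<subseteq> \<F>) \<and> cross_t_intersecting t k B"
      using H unfolding B_def f_def cross_t_intersecting_def
      by (auto split: if_splits) (metis Suc_lessD Suc_mono lessI nat_neq_iff less_trans_Suc)+
    then have "(\<Prod>i<k. card (B i)) \<le> card \<L> ^ k" using IH unfolding max_attained_at_const_def by blast
    moreover have "(\<Prod>i<k. card (B i)) = (\<Prod>i\<in>{..<Suc k} - {j}. c i)"
    proof -
      have "(\<Prod>i\<in>{..<Suc k} - {j}. c i) = (\<Prod>i\<in>f j ` {..<k}. c i)"
        using skip_img[OF j] unfolding f_def by simp
      also have "\<dots> = (\<Prod>i<k. c (f j i))"
        by (rule prod.reindex[unfolded comp_def]) (simp add: f_def skip_inj)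
      finally show ?thesis unfolding B_def c_def by simp
    qed
    ultimately show ?thesis by simp
  qed
  have rem: "(\<Prod>i\<in>{..<Suc k} - {j}. c i) * c j = P" if "j < Suc k" for j
    using prod.remove[of "{..<Suc k}" j c] that unfolding P_def by (simp add: mult.commute)
  show "(\<Prod>i<Suc k. card (A i)) \<le> card \<L> ^ Suc k"
  proof (cases "P = 0")
    case True
    then have "(\<Prod>i<Suc k. card (A i)) = 0" using True unfolding P_def c_def by (simp only:)
    then show ?thesis by (simp only: zero_le)
  next
    case False
    have "(\<Prod>j<Suc k. (\<Prod>i\<in>{..<Suc k} - {j}. c i) * c j) = P ^ Suc k"
      using rem by simp
    then have "(\<Prod>j<Suc k. (\<Prod>i\<in>{..<Suc k} - {j}. c i)) * P = P ^ k * P"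
      unfolding prod.distrib P_def by (simp add: mult.commute)
    then have eq: "(\<Prod>j<Suc k. (\<Prod>i\<in>{..<Suc k} - {j}. c i)) = P ^ k" using False by simp
    have "(\<Prod>j<Suc k. (\<Prod>i\<in>{..<Suc k} - {j}. c i)) \<le> (\<Prod>j<Suc k. card \<L> ^ k)"
      by (rule prod_mono) (use Q in auto)
    moreover have "(\<Prod>j<Suc k. card \<L> ^ k) = (card \<L> ^ Suc k) ^ k"
      by (simp only: prod_constant card_lessThan power_mult[symmetric] mult.commute)
    ultimately have "P ^ k \<le> (card \<L> ^ Suc k) ^ k" using eq by (simp only:)
    then have "P \<le> card \<L> ^ Suc k"
      proof -
      obtain m where m: "k = Suc m" using k by (cases k) auto
      show ?thesis using power_le_imp_le_base[of P m "card \<L> ^ Suc k"] \<open>P ^ k \<le> _\<close> m by simp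
    qed
    then show ?thesis unfolding P_def c_def .
  qed
qed

theorem lemma5p1:
  fixes t p k :: nat and \<F> \<L> :: "'a set set"
  assumes "t \<ge> 1" and "p \<ge> 1"
    and "finite \<F>" and "\<forall>F\<in>\<F>. finite F"
    and "largest_t_intersecting t \<F> \<L>"
    and "max_attained_at_const t p \<F> \<L>"
    and "k \<ge> p"
  shows "max_attained_at_const t k \<F> \<L>"
  using assms(7)
proof (induction k rule: dec_induct)
  case base then show ?case using assms(6) .
next
  case (step n) then show ?case using Submission.step[of n] assms(2) by simp
qed

end
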